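(* Let $X$ be a compact metric space and $f\colon X\to X$ continuous. If $(X,f)$ has $\gamma$-restricted two-sided orbital limit shadowing, then $ICT_f\subseteq\gamma_f$.
   Context: A full trajectory is $\langle z_i\rangle_{i\in\mathbb Z}$ with $f(z_i)=z_{i+1}$. For two-sided sequences, $\omega(\langle x_i\rangle)=\bigcap_{M}\overline{\{x_n:n>M\}}$, $\alpha(\langle x_i\rangle)=\bigcap_M\overline{\{x_n:n<-M\}}$; for $x\in X$, $\omega(x)$ is the set of accumulation points of $x,f(x),f^2(x),\dots$. A two-sided asymptotic pseudo-orbit is $\langle x_i\rangle_{i\in\mathbb Z}$ with $d(f(x_i),x_{i+1})\to0$ as $i\to\pm\infty$. $\gamma$-restricted two-sided orbital limit shadowing: for every two-sided asymptotic pseudo-orbit $\langle x_i\rangle$ with $\alpha(\langle x_i\rangle)=\omega(\langle x_i\rangle)$ there is a full trajectory $\langle z_i\rangle$ with $\alpha(\langle z_i\rangle)=\alpha(\langle x_i\rangle)$ and $\omega(\langle z_i\rangle)=\omega(\langle x_i\rangle)$. $ICT_f$ is the set of nonempty closed internally chain transitive sets ($A$ is internally chain transitive if for all $a,b\in A$ and $\delta>0$ there exist $x_0=a,\dots,x_N=b$ in $A$, $N\ge1$, with $d(f(x_i),x_{i+1})<\delta$). The $\gamma$-limit set $\gamma(x)$ of $x\in X$: $y\in\gamma(x)$ iff $y\in\omega(x)$ and there exist a sequence $\langle y_i\rangle_{i\ge1}$ in $X$ and a strictly increasing sequence $\langle n_i\rangle$ in $\mathbb N$ with $f^{n_i}(y_i)=x$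 for each $i$ and $y_i\to y$. $\gamma_f=\{\gamma(x):x\in X\}$. *)

theory Defs
  imports "HOL-Analysis.Analysis"
begin

text \<open>The compact metric space is a compact set X in a metric-space type; f maps X into X.
  All notions are relativised to X.\<close>

definition full_trajectory :: "'a set \<Rightarrow> ('a \<Rightarrow> 'a) \<Rightarrow> (int \<Rightarrow> 'a) \<Rightarrow> bool" where
  "full_trajectory X f z \<longleftrightarrow> (\<forall>i. z i \<in> X \<and> f (z i) = z (i + 1))"

definition omega_seq :: "(int \<Rightarrow> 'a::topological_space) \<Rightarrow> 'a set" where
  "omega_seq x = (\<Inter>M. closure {x n | n. n > M})"

definition alpha_seq :: "(int \<Rightarrow> 'a::topological_space) \<Rightarrow> 'a set" where
  "alpha_seq x = (\<Inter>M. closure {x n | n. n < - M})"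

definition two_sided_asym_pseudo_orbit :: "'a set \<Rightarrow> ('a \<Rightarrow> 'a) \<Rightarrow> (int \<Rightarrow> 'a::metric_space) \<Rightarrow> bool" where
  "two_sided_asym_pseudo_orbit X f x \<longleftrightarrow>
     (\<forall>i. x i \<in> X) \<and>
     ((\<lambda>i. dist (f (x i)) (x (i + 1))) \<longlongrightarrow> 0) at_top \<and>
     ((\<lambda>i. dist (f (x i)) (x (i + 1))) \<longlongrightarrow> 0) at_bot"

definition gamma_restricted_two_sided_orbital_limit_shadowing ::
  "'a::metric_space set \<Rightarrow> ('a \<Rightarrow> 'a) \<Rightarrow> bool" where
  "gamma_restricted_two_sided_orbital_limit_shadowing X f \<longleftrightarrow>
     (\<forall>x::int \<Rightarrow> 'a. two_sided_asym_pseudo_orbit X f x \<and> alpha_seq x = omega_seq x \<longrightarrow>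
        (\<exists>z. full_trajectory X f z \<and> alpha_seq z = alpha_seq x \<and> omega_seq z = omega_seq x))"

definition internally_chain_transitive :: "'a set \<Rightarrow> ('a \<Rightarrow> 'a) \<Rightarrow> 'a::metric_space set \<Rightarrow> bool" where
  "internally_chain_transitive X f A \<longleftrightarrow>
     (\<forall>a\<in>A. \<forall>b\<in>A. \<forall>\<delta>>0. \<exists>N::nat. N \<ge> 1 \<and> (\<exists>x::nat \<Rightarrow> 'a.
        x 0 = a \<and> x N = b \<and> (\<forall>i\<le>N. x i \<in> A) \<and> (\<forall>i<N. dist (f (x i)) (x (Suc i)) < \<delta>)))"

definition ICT :: "'a set \<Rightarrow> ('a \<Rightarrow> 'a) \<Rightarrow> 'a::metric_space set set" where
  "ICT X f = {A. A \<subseteq> X \<and> A \<noteq> {} \<and> closed A \<and> internally_chain_transitive X f A}"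

definition omega_pt :: "('a \<Rightarrow> 'a) \<Rightarrow> 'a \<Rightarrow> 'a::topological_space set" where
  "omega_pt f x = (\<Inter>M. closure {(f ^^ n) x | n. n \<ge> M})"

definition gamma_pt :: "'a set \<Rightarrow> ('a \<Rightarrow> 'a) \<Rightarrow> 'a \<Rightarrow> 'a::metric_space set" where
  "gamma_pt X f x = {y. y \<in> omega_pt f x \<and>
      (\<exists>ys::nat \<Rightarrow> 'a. \<exists>ns::nat \<Rightarrow> nat. strict_mono ns \<and>
         (\<forall>i. ys i \<in> X \<and> (f ^^ ns i) (ys i) = x) \<and> ys \<longlonglongrightarrow> y)}"

definition gamma_sets :: "'a set \<Rightarrow> ('a \<Rightarrow> 'a) \<Rightarrow> 'a::metric_space set set" where
  "gamma_sets X f = {gamma_pt X f x | x. x \<in> X}"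

end

theory Submission
  imports Defs
begin

lemma dense_seq:
  fixes A :: "'a::metric_space set"
  assumes "compact A" "A \<noteq> {}"
  shows "\<exists>d::nat\<Rightarrow>'a. (\<forall>j. d j \<in> A) \<and> (\<forall>a\<in>A. \<forall>e>0. \<exists>j. dist (d j) a < e)"
proof -
  have "\<exists>K. finite K \<and> K \<subseteq> A \<and> A \<subseteq> (\<Union>x\<in>K. ball x (1 / real (Suc m)))" for m
  proof -
    have "A \<subseteq> (\<Union>x\<in>A. ball x (1 / real (Suc m)))" by auto
    then obtain K where "K \<subseteq> A" "finite K" "A \<subseteq> (\<Union>x\<in>K. ball x (1 / real (Suc m)))"
      using compactE_image[OF assms(1), of A "\<lambda>x. ball x (1 / real (Suc m))"] by auto
    then show ?thesis by blast
  qed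
  then obtain K where K: "\<And>m. finite (K m) \<and> K m \<subseteq> A \<and> A \<subseteq> (\<Union>x\<in>K m. ball x (1 / real (Suc m)))"
    by metis
  define D where "D = (\<Union>m. K m)"
  have cD: "countable D" unfolding D_def using K by (auto intro: countable_finite)
  have DA: "D \<subseteq> A" unfolding D_def using K by auto
  have "K 0 \<noteq> {}" using K[of 0] assms(2) by auto
  then have Dne: "D \<noteq> {}" unfolding D_def by auto
  define d where "d = from_nat_into D"
  have rd: "range d = D" unfolding d_def using cD Dne by simp
  show ?thesis
  proof (intro exI[of _ d] conjI allI ballI impI)
    fix j show "d j \<in> A" using rd DA by auto
  next
    fix a e assume a: "a \<in> A" and e: "(0::real) < e"
    obtain m where m: "m > 0" "inverse (real m) < e" using ex_inverse_of_nat_less[OF e] by auto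
    have le: "1 / real (Suc m) \<le> inverse (real m)" using m(1)
      by (simp add: divide_simps)
    obtain x where x: "x \<in> K m" "a \<in> ball x (1 / real (Suc m))" using K[of m] a by auto
    have "x \<in> D" using x unfolding D_def by auto
    then obtain j where "d j = x" using rd by auto
    moreover have "dist x a < e" using x(2) le m(2) by (simp add: mem_ball)
    ultimately show "\<exists>j. dist (d j) a < e" by blast
  qed
qed

lemma concat_chains:
  fixes S :: "nat \<Rightarrow> 'a \<Rightarrow> 'a \<Rightarrow> bool" and p :: "nat \<Rightarrow> 'a"
  assumes ch: "\<And>k a b. a \<in> A \<Longrightarrow> b \<in> A \<Longrightarrow> \<exists>N\<ge>1. \<exists>c. c 0 = a \<and> c N = b \<and> (\<forall>i\<le>N. c i \<in> A) \<and> (\<forall>i<N. S k (c i) (c (Suc i)))"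
    and pA: "\<And>k. p k \<in> A"
  shows "\<exists>y. (\<forall>n. y n \<in> A) \<and> y 0 = p 0 \<and> (\<forall>K. \<exists>N. \<forall>n\<ge>N. \<exists>k\<ge>K. S k (y n) (y (Suc n))) \<and> (\<forall>k. \<exists>n\<ge>k. y n = p k)"
proof -
  have "\<forall>k. \<exists>N c. N \<ge> 1 \<and> c 0 = p k \<and> c N = p (Suc k) \<and> (\<forall>i\<le>N. c i \<in> A) \<and> (\<forall>i<N. S k (c i) (c (Suc i)))"
    using ch pA by blast
  then obtain N c where Nc: "\<And>k. N k \<ge> 1 \<and> c k 0 = p k \<and> c k (N k) = p (Suc k) \<and> (\<forall>i\<le>N k. c k i \<in> A) \<and> (\<forall>i<N k. S k (c k i) (c k (Suc i)))"
    by metis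
  define st where "st = rec_nat (0::nat, 0::nat) (\<lambda>_ kj. if Suc (snd kj) < N (fst kj) then (fst kj, Suc (snd kj)) else (Suc (fst kj), 0))"
  have st0: "st 0 = (0,0)" unfolding st_def by simp
  have stS: "st (Suc n) = (if Suc (snd (st n)) < N (fst (st n)) then (fst (st n), Suc (snd (st n))) else (Suc (fst (st n)), 0))" for n
    unfolding st_def by simp
  define y where "y n = c (fst (st n)) (snd (st n))" for n
  have inv: "snd (st n) < N (fst (st n))" for n
  proof (induction n)
    case 0 then show ?case using Nc[of 0] st0 by simp
  next
    case (Suc n) then show ?case using Nc[of "Suc (fst (st n))"] stS[of n] by auto
  qed
  have step: "S (fst (st n)) (y n) (y (Suc n))" for n
  proof (cases "Suc (snd (st n)) < N (fst (st n))")
    case True then show ?thesis using Nc[of "fst (st n)"] stS[of n] unfolding y_def by auto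
  next
    case False
    then have "Suc (snd (st n)) = N (fst (st n))" using inv[of n] by simp
    then have "y (Suc n) = c (fst (st n)) (Suc (snd (st n)))"
      using False stS[of n] Nc[of "fst (st n)"] Nc[of "Suc (fst (st n))"] unfolding y_def by auto
    then show ?thesis using Nc[of "fst (st n)"] inv[of n] unfolding y_def by auto
  qed
  have mono1: "fst (st n) \<le> fst (st (Suc n))" for n using stS[of n] by auto
  have le_n: "fst (st n) \<le> n" for n
  proof (induction n)
    case 0 then show ?case using st0 by simp
  next
    case (Suc n) then show ?case using stS[of n] by auto
  qed
  have mono: "m \<le> n \<Longrightarrow> fst (st m) \<le> fst (st n)" for m n
    by (rule lift_Suc_mono_le[of "\<lambda>n. fst (st n)"]) (use mono1 in auto)
  have walk: "st n = (k, 0) \<Longrightarrow> j < N k \<Longrightarrow> st (n + j) = (k, j)" for n k j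
  proof (induction j)
    case 0 then show ?case by simp
  next
    case (Suc j) then show ?case using stS[of "n + j"] by auto
  qed
  have reach: "\<exists>n. st n = (k, 0)" for k
  proof (induction k)
    case 0 then show ?case using st0 by blast
  next
    case (Suc k)
    then obtain n where n: "st n = (k, 0)" by blast
    have "N k - 1 < N k" using Nc[of k] by simp
    then have "st (n + (N k - 1)) = (k, N k - 1)" using walk n by blast
    then have "st (Suc (n + (N k - 1))) = (Suc k, 0)" using stS[of "n + (N k - 1)"] Nc[of k] by auto
    then show ?case by blast
  qed
  show ?thesis
  proof (intro exI[of _ y] conjI allI)
    fix n show "y n \<in> A" using Nc[of "fst (st n)"] inv[of n] unfolding y_def by auto
  next
    show "y 0 = p 0" using st0 Nc[of 0] unfolding y_def by simp
  next
    fix K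
    obtain n0 where n0: "st n0 = (K, 0)" using reach by blast
    have "\<forall>n\<ge>n0. \<exists>k\<ge>K. S k (y n) (y (Suc n))"
    proof (intro allI impI)
      fix n assume "n0 \<le> n"
      then have "K \<le> fst (st n)" using mono[of n0 n] n0 by simp
      then show "\<exists>k\<ge>K. S k (y n) (y (Suc n))" using step[of n] by blast
    qed
    then show "\<exists>N. \<forall>n\<ge>N. \<exists>k\<ge>K. S k (y n) (y (Suc n))" by blast
  next
    fix k
    obtain n where n: "st n = (k, 0)" using reach by blast
    have "k \<le> n" using le_n[of n] n by simp
    moreover have "y n = p k" using n Nc[of k] unfolding y_def by simp
    ultimately show "\<exists>n\<ge>k. y n = p k" by blast
  qed
qed

lemma subseq_conv:
  fixes g :: "nat \<Rightarrow> 'a::metric_space"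
  assumes "\<And>M e. e > 0 \<Longrightarrow> \<exists>m>M. dist (g m) a < e"
  shows "\<exists>ns. strict_mono ns \<and> (\<lambda>i. g (ns i)) \<longlonglongrightarrow> a"
proof -
  have "\<forall>M e. \<exists>m. e > 0 \<longrightarrow> m > M \<and> dist (g m) a < e" using assms by blast
  then obtain F where F0: "\<forall>M e. e > 0 \<longrightarrow> F M e > M \<and> dist (g (F M e)) a < e"
    by metis
  then have F: "\<And>M e. e > 0 \<Longrightarrow> F M e > M \<and> dist (g (F M e)) a < e" by blast
  define ns where "ns = rec_nat (F 0 1) (\<lambda>i prev. F prev (1 / real (Suc (Suc i))))"
  have ns0: "ns 0 = F 0 1" and nsS: "ns (Suc i) = F (ns i) (1 / real (Suc (Suc i)))" for i
    unfolding ns_def by simp_all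
  have sm: "strict_mono ns" unfolding strict_mono_Suc_iff using nsS F by simp
  have d: "dist (g (ns i)) a < 1 / real (Suc i)" for i
    by (cases i) (use F ns0 nsS in auto)
  have "(\<lambda>i. g (ns i)) \<longlonglongrightarrow> a"
    unfolding lim_sequentially
  proof (intro allI impI)
    fix r :: real assume r: "r > 0"
    obtain m where m: "m > 0" "inverse (real m) < r" using ex_inverse_of_nat_less[OF r] by auto
    have "\<forall>n\<ge>m. dist (g (ns n)) a < r"
    proof (intro allI impI)
      fix n assume "m \<le> n"
      then have "1 / real (Suc n) \<le> inverse (real m)" using m(1) by (simp add: divide_simps)
      then show "dist (g (ns n)) a < r" using d[of n] m(2) by linarith
    qed
    then show "\<exists>no. \<forall>n\<ge>no. dist (g (ns n)) a < r" by blast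
  qed
  then show ?thesis using sm by blast
qed

lemma omega_pt_traj:
  assumes "\<And>n. (f ^^ n) (z 0) = z (int n)"
  shows "omega_pt f (z 0) = omega_seq z"
proof
  show "omega_pt f (z 0) \<subseteq> omega_seq z"
    unfolding omega_pt_def omega_seq_def
  proof (intro subsetI InterI)
    fix y T assume y: "y \<in> (\<Inter>M. closure {(f ^^ n) (z 0) |n. M \<le> n})"
      and T: "T \<in> range (\<lambda>M::int. closure {z n |n. M < n})"
    then obtain M where TM: "T = closure {z n |n. M < n}" by auto
    have "{(f ^^ n) (z 0) |n. nat (M + 1) \<le> n} \<subseteq> {z n |n. M < n}"
      using assms by force
    then show "y \<in> T" using y TM closure_mono by blast
  qed
next
  show "omega_seq z \<subseteq> omega_pt f (z 0)"
    unfolding omega_pt_def omega_seq_def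
  proof (intro subsetI InterI)
    fix y T assume y: "y \<in> (\<Inter>M::int. closure {z n |n. M < n})"
      and T: "T \<in> range (\<lambda>M. closure {(f ^^ n) (z 0) |n. M \<le> n})"
    then obtain M where TM: "T = closure {(f ^^ n) (z 0) |n. M \<le> n}" by auto
    have "{z n |n. int M - 1 < n} \<subseteq> {(f ^^ n) (z 0) |n. M \<le> n}"
    proof
      fix u assume "u \<in> {z n |n. int M - 1 < n}"
      then obtain n where n: "u = z n" "int M - 1 < n" by auto
      then have "n = int (nat n)" "M \<le> nat n" by auto
      moreover have "u = (f ^^ nat n) (z 0)" using n assms[of "nat n"] \<open>n = int (nat n)\<close> by simp
      ultimately show "u \<in> {(f ^^ n) (z 0) |n. M \<le> n}" by blast
    qed
    then show "y \<in> T" using y TM closure_mono by blast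
  qed
qed

theorem mainTheorem4:
  fixes X :: "'a::metric_space set" and f :: "'a \<Rightarrow> 'a"
  assumes "compact X"
    and "continuous_on X f"
    and "f ` X \<subseteq> X"
    and "gamma_restricted_two_sided_orbital_limit_shadowing X f"
  shows "ICT X f \<subseteq> gamma_sets X f"
proof
  fix A assume "A \<in> ICT X f"
  then have AX: "A \<subseteq> X" and Ane: "A \<noteq> {}" and Acl: "closed A"
    and ict: "internally_chain_transitive X f A" by (auto simp: ICT_def)
  have cA: "compact A" using compact_Int_closed[OF assms(1) Acl] AX by (simp add: Int_absorb1)
  obtain d :: "nat \<Rightarrow> 'a" where dA: "\<And>j. d j \<in> A" and dense: "\<And>a e. a \<in> A \<Longrightarrow> e > 0 \<Longrightarrow> \<exists>j. dist (d j) a < e"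
    using dense_seq[OF cA Ane] by blast
  define p where "p k = d (fst (prod_decode k))" for k
  have pA: "\<And>k. p k \<in> A" using dA unfolding p_def by simp
  have pinf: "\<exists>k\<ge>M. p k = d j" for j M
    using le_prod_encode_2[of M j] unfolding p_def by (metis fst_conv prod_encode_inverse)
  have chF: "\<exists>N\<ge>1. \<exists>c. c 0 = a \<and> c N = b \<and> (\<forall>i\<le>N. c i \<in> A) \<and> (\<forall>i<N. dist (f (c i)) (c (Suc i)) < 1 / real (Suc k))"
    if "a \<in> A" "b \<in> A" for k a b
  proof -
    have "(0::real) < 1 / real (Suc k)" by simp
    then show ?thesis using ict that unfolding internally_chain_transitive_def by blast
  qed
  have chB: "\<exists>N\<ge>1. \<exists>c. c 0 = a \<and> c N = b \<and> (\<forall>i\<le>N. c i \<in> A) \<and> (\<forall>i<N. dist (f (c (Suc i))) (c i) < 1 / real (Suc k))"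
    if ab: "a \<in> A" "b \<in> A" for k a b
  proof -
    obtain N c where N: "N \<ge> 1" "c 0 = b" "c N = a" "\<forall>i\<le>N. c i \<in> A"
      "\<forall>i<N. dist (f (c i)) (c (Suc i)) < 1 / real (Suc k)"
      using chF[OF ab(2) ab(1)] by blast
    define c' where "c' i = c (N - i)" for i
    have "\<forall>i<N. dist (f (c' (Suc i))) (c' i) < 1 / real (Suc k)"
    proof (intro allI impI)
      fix i assume i: "i < N"
      then have "Suc (N - Suc i) = N - i" by simp
      then show "dist (f (c' (Suc i))) (c' i) < 1 / real (Suc k)"
        using N(5) i unfolding c'_def by (metis diff_less_Suc le_less_trans less_Suc_eq_le not_less_eq)
    qed
    moreover have "\<forall>i\<le>N. c' i \<in> A" using N(4) unfolding c'_def by simp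
    moreover have "c' 0 = a" "c' N = b" using N unfolding c'_def by auto
    ultimately show ?thesis using N(1) by blast
  qed
  obtain y where yA: "\<And>n. y n \<in> A" and y0: "y 0 = p 0"
    and yS: "\<And>K. \<exists>N. \<forall>n\<ge>N. \<exists>k\<ge>K. dist (f (y n)) (y (Suc n)) < 1 / real (Suc k)"
    and yinf: "\<And>k. \<exists>n\<ge>k. y n = p k"
    using concat_chains[of A "\<lambda>k a b. dist (f a) b < 1 / real (Suc k)" p, OF chF pA] by blast
  obtain w where wA: "\<And>n. w n \<in> A" and w0: "w 0 = p 0"
    and wS: "\<And>K. \<exists>N. \<forall>n\<ge>N. \<exists>k\<ge>K. dist (f (w (Suc n))) (w n) < 1 / real (Suc k)"
    and winf: "\<And>k. \<exists>n\<ge>k. w n = p k"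
    using concat_chains[of A "\<lambda>k a b. dist (f b) a < 1 / real (Suc k)" p, OF chB pA] by blast
  have small: "\<exists>K. 1 / real (Suc K) < e" if e0: "e > 0" for e :: real
  proof -
    obtain m where m: "m > 0" "inverse (real m) < e" using ex_inverse_of_nat_less[OF e0] by auto
    have "1 / real (Suc m) \<le> inverse (real m)" using m(1) by (simp add: divide_simps)
    then show ?thesis using m(2) by (intro exI[of _ m]) linarith
  qed
  have mono_inv: "1 / real (Suc k) \<le> 1 / real (Suc K)" if "K \<le> k" for k K
    using that by (simp add: divide_simps)
  define x where "x i = (if 0 \<le> i then y (nat i) else w (nat (- i)))" for i :: int
  have xpos: "x (int n) = y n" for n unfolding x_def by simp
  have xneg: "x (- int n) = w n" for n unfolding x_def using y0 w0 by (cases "n = 0") auto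
  have xA: "x i \<in> A" for i unfolding x_def using yA wA by simp
  have po: "two_sided_asym_pseudo_orbit X f x"
    unfolding two_sided_asym_pseudo_orbit_def
  proof (intro conjI allI)
    fix i show "x i \<in> X" using xA AX by auto
  next
    show "((\<lambda>i. dist (f (x i)) (x (i + 1))) \<longlongrightarrow> 0) at_top"
      unfolding tendsto_iff
    proof (intro allI impI)
      fix e :: real assume e: "e > 0"
      obtain K where K: "1 / real (Suc K) < e" using small[OF e] by blast
      obtain N where N: "\<forall>n\<ge>N. \<exists>k\<ge>K. dist (f (y n)) (y (Suc n)) < 1 / real (Suc k)" using yS by blast
      have "\<forall>i\<ge>int N. dist (dist (f (x i)) (x (i + 1))) 0 < e"
      proof (intro allI impI)
        fix i assume i: "int N \<le> i"
        then obtain n where n: "i = int n" "N \<le> n" by (metis nat_int nat_le_eq_zle nonneg_int_cases of_nat_0_le_iff order_trans)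
        then obtain k where "k \<ge> K" "dist (f (y n)) (y (Suc n)) < 1 / real (Suc k)" using N by blast
        then have "dist (f (y n)) (y (Suc n)) < e" using mono_inv K by fastforce
        moreover have "x (i + 1) = y (Suc n)" using xpos[of "Suc n"] n by (simp add: add.commute)
        ultimately show "dist (dist (f (x i)) (x (i + 1))) 0 < e" using n xpos by simp
      qed
      then show "\<forall>\<^sub>F i in at_top. dist (dist (f (x i)) (x (i + 1))) 0 < e"
        unfolding eventually_at_top_linorder by blast
    qed
  next
    show "((\<lambda>i. dist (f (x i)) (x (i + 1))) \<longlongrightarrow> 0) at_bot"
      unfolding tendsto_iff
    proof (intro allI impI)
      fix e :: real assume e: "e > 0"
      obtain K where K: "1 / real (Suc K) < e" using small[OF e] by blast
      obtain N where N: "\<forall>n\<ge>N. \<exists>k\<ge>K. dist (f (w (Suc n))) (w n) < 1 / real (Suc k)" using wS by blast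
      have "\<forall>i\<le>- int N - 1. dist (dist (f (x i)) (x (i + 1))) 0 < e"
      proof (intro allI impI)
        fix i assume i: "i \<le> - int N - 1"
        define n where "n = nat (- i - 1)"
        have n: "i = - int (Suc n)" "i + 1 = - int n" "N \<le> n" using i unfolding n_def by auto
        then obtain k where "k \<ge> K" "dist (f (w (Suc n))) (w n) < 1 / real (Suc k)" using N by blast
        then have "dist (f (w (Suc n))) (w n) < e" using mono_inv K by fastforce
        moreover have "x i = w (Suc n)" using xneg[of "Suc n"] n(1) by metis
        moreover have "x (i + 1) = w n" using xneg[of n] n(2) by metis
        ultimately show "dist (dist (f (x i)) (x (i + 1))) 0 < e" by simp
      qed
      then show "\<forall>\<^sub>F i in at_bot. dist (dist (f (x i)) (x (i + 1))) 0 < e"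
        unfolding eventually_at_bot_linorder by blast
    qed
  qed
  have om: "omega_seq x = A"
  proof
    have "omega_seq x \<subseteq> closure {x n | n. n > 0}" unfolding omega_seq_def by blast
    also have "\<dots> \<subseteq> A" using xA Acl by (intro closure_minimal) auto
    finally show "omega_seq x \<subseteq> A" .
  next
    show "A \<subseteq> omega_seq x" unfolding omega_seq_def
    proof (intro subsetI InterI)
      fix a T assume a: "a \<in> A" and T: "T \<in> range (\<lambda>M::int. closure {x n |n. M < n})"
      then obtain M where TM: "T = closure {x n |n. M < n}" by auto
      have "a \<in> closure {x n |n. M < n}" unfolding closure_approachable
      proof (intro allI impI)
        fix e :: real assume e: "e > 0"
        obtain j where j: "dist (d j) a < e" using dense[OF a e] by blast
        obtain k where k: "k \<ge> nat M + 1" "p k = d j" using pinf by blast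
        obtain n where n: "n \<ge> k" "y n = p k" using yinf by blast
        have "x (int n) \<in> {x n |n. M < n}" using n k by auto
        then show "\<exists>u\<in>{x n |n. M < n}. dist u a < e" using xpos n k j by metis
      qed
      then show "a \<in> T" using TM by simp
    qed
  qed
  have al: "alpha_seq x = A"
  proof
    have "alpha_seq x \<subseteq> closure {x n | n. n < - 0}" unfolding alpha_seq_def by blast
    also have "\<dots> \<subseteq> A" using xA Acl by (intro closure_minimal) auto
    finally show "alpha_seq x \<subseteq> A" .
  next
    show "A \<subseteq> alpha_seq x" unfolding alpha_seq_def
    proof (intro subsetI InterI)
      fix a T assume a: "a \<in> A" and T: "T \<in> range (\<lambda>M::int. closure {x n |n. n < - M})"
      then obtain M where TM: "T = closure {x n |n. n < - M}" by auto
      have "a \<in> closure {x n |n. n < - M}" unfolding closure_approachable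
      proof (intro allI impI)
        fix e :: real assume e: "e > 0"
        obtain j where j: "dist (d j) a < e" using dense[OF a e] by blast
        obtain k where k: "k \<ge> nat M + 1" "p k = d j" using pinf by blast
        obtain n where n: "n \<ge> k" "w n = p k" using winf by blast
        have "x (- int n) \<in> {x n |n. n < - M}" using n k by auto
        then show "\<exists>u\<in>{x n |n. n < - M}. dist u a < e" using xneg n k j by metis
      qed
      then show "a \<in> T" using TM by simp
    qed
  qed
  obtain z where zt: "full_trajectory X f z" and za: "alpha_seq z = A" and zo: "omega_seq z = A"
    using assms(4) po om al unfolding gamma_restricted_two_sided_orbital_limit_shadowing_def by metis
  have iter: "(f ^^ n) (z m) = z (m + int n)" for n m
  proof (induction n)
    case 0 then show ?case by simp
  next
    case (Suc n) then show ?case using zt unfolding full_trajectory_def by (simp add: ac_simps)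
  qed
  have opt: "omega_pt f (z 0) = A"
    using omega_pt_traj[of f z] iter[of _ 0] zo by simp
  have "gamma_pt X f (z 0) = A"
  proof
    show "gamma_pt X f (z 0) \<subseteq> A" using opt unfolding gamma_pt_def by blast
  next
    show "A \<subseteq> gamma_pt X f (z 0)"
    proof
      fix a assume a: "a \<in> A"
      have cl: "a \<in> closure {z n |n. n < - M}" for M using a za unfolding alpha_seq_def by blast
      have "\<exists>m>M. dist (z (- int m)) a < e" if e: "e > 0" for M e
      proof -
        obtain u where u: "u \<in> {z n |n. n < - int M}" "dist u a < e"
          using cl[of "int M"] e unfolding closure_approachable by blast
        then obtain n where n: "u = z n" "n < - int M" by auto
        then have "nat (- n) > M" "z (- int (nat (- n))) = u" by auto
        then show ?thesis using u(2) by blast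
      qed
      then obtain ns where ns: "strict_mono ns" "(\<lambda>i. z (- int (ns i))) \<longlonglongrightarrow> a"
        using subseq_conv[of "\<lambda>m. z (- int m)" a] by blast
      have "\<forall>i. z (- int (ns i)) \<in> X \<and> (f ^^ ns i) (z (- int (ns i))) = z 0"
        using zt iter unfolding full_trajectory_def by simp
      then have "\<exists>ys ns. strict_mono ns \<and> (\<forall>i. ys i \<in> X \<and> (f ^^ ns i) (ys i) = z 0) \<and> ys \<longlonglongrightarrow> a"
        using ns by (intro exI[of _ "\<lambda>i. z (- int (ns i))"] exI[of _ ns]) blast
      then show "a \<in> gamma_pt X f (z 0)" unfolding gamma_pt_def using a opt by blast
    qed
  qed
  moreover have "z 0 \<in> X" using zt unfolding full_trajectory_def by simp
  ultimately show "A \<in> gamma_sets X f" unfolding gamma_sets_def by blast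
qed

end
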